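(* Let $G=(C,D,E)$ be a finite bipartite graph with left vertex set $C$, right vertex set $D$, and edge set $E\subseteq C\times D$. Then there exist $a,b\in\mathbb{N}$ with $b\le a$ such that $G$ is isomorphic to an induced subgraph of $B_{a,b}$.
   Context: For $n\in\mathbb{N}$, $[n]=\{1,\dots,n\}$, and for a set $X$, $\binom{X}{k}$ denotes the set of $k$-element subsets of $X$. For $k\le n$, $B_{n,k}$ is the bipartite graph with left vertex set $[n]$, right vertex set $\binom{[n]}{k}$, and edge set $\{(x,X)\in[n]\times\binom{[n]}{k} : x\in X\}$. For a graph $H=(V,E)$ and $V'\subseteq V$, the induced subgraph on $V'$ has vertex set $V'$ and edge set consisting of all edges of $H$ with both endpoints in $V'$. *)

theory Defs
  imports Main
begin

type_synonym ('a, 'b) bigraph = "'a set \<times> 'b set \<times> ('a \<times> 'b) set"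

definition bipartite_graph :: "('a, 'b) bigraph \<Rightarrow> bool" where
  "bipartite_graph G = (case G of (C, D, E) \<Rightarrow> E \<subseteq> C \<times> D)"

definition ksubsets :: "nat \<Rightarrow> nat \<Rightarrow> nat set set" where
  "ksubsets n k = {X. X \<subseteq> {1..n} \<and> card X = k}"

definition B_graph :: "nat \<Rightarrow> nat \<Rightarrow> (nat, nat set) bigraph" where
  "B_graph n k = ({1..n}, ksubsets n k,
     {(x, X). x \<in> {1..n} \<and> X \<in> ksubsets n k \<and> x \<in> X})"

definition induced_sub :: "('a, 'b) bigraph \<Rightarrow> 'a set \<Rightarrow> 'b set \<Rightarrow> ('a, 'b) bigraph" where
  "induced_sub G L' R' = (case G of (C, D, E) \<Rightarrow> (L', R', E \<inter> (L' \<times> R')))"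

definition is_induced_sub :: "('a, 'b) bigraph \<Rightarrow> ('a, 'b) bigraph \<Rightarrow> bool" where
  "is_induced_sub H G = (case G of (C, D, E) \<Rightarrow>
     (\<exists>L' R'. L' \<subseteq> C \<and> R' \<subseteq> D \<and> H = induced_sub G L' R'))"

definition bigraph_iso :: "('a, 'b) bigraph \<Rightarrow> ('c, 'd) bigraph \<Rightarrow> bool" where
  "bigraph_iso G H = (case G of (C, D, E) \<Rightarrow> case H of (C', D', E') \<Rightarrow>
     (\<exists>f g. bij_betw f C C' \<and> bij_betw g D D' \<and>
        (\<forall>x\<in>C. \<forall>y\<in>D. (x, y) \<in> E \<longleftrightarrow> (f x, g y) \<in> E')))"

end

theory Submission
  imports Defs
begin

theorem mainTheorem5:
  fixes C :: "'a set" and D :: "'b set" and E :: "('a \<times> 'b) set"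
  assumes "finite C" and "finite D" and "bipartite_graph (C, D, E)"
  shows "\<exists>a b :: nat. b \<le> a \<and>
           (\<exists>H. is_induced_sub H (B_graph a b) \<and> bigraph_iso (C, D, E) H)"
proof -
  define n where "n = card C"
  define m where "m = card D"
  obtain f where f: "bij_betw f C {0..<n}" using ex_bij_betw_finite_nat[OF assms(1)] n_def by blast
  obtain h where h: "bij_betw h D {0..<m}" using ex_bij_betw_finite_nat[OF assms(2)] m_def by blast
  define F where "F x = Suc (f x)" for x
  define N where "N y = {x\<in>C. (x,y)\<in>E}" for y
  define s where "s y = (h y + 1) * (n+1)" for y
  define P where "P y = {s y + card (N y) ..< s y + (n+1)}" for y
  define G where "G y = F ` N y \<union> P y" for y
  define a where "a = (m+1)*(n+1)"
  define b where "b = n+1"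
  have finj: "inj_on F C" using f unfolding F_def bij_betw_def inj_on_def by auto
  have Fr: "x \<in> C \<Longrightarrow> F x \<in> {1..n}" for x using f unfolding F_def bij_betw_def by (auto simp: Suc_le_eq)
  have NC: "N y \<subseteq> C" for y unfolding N_def by auto
  have cN: "card (N y) \<le> n" for y unfolding n_def by (rule card_mono[OF assms(1) NC])
  have hy: "y \<in> D \<Longrightarrow> h y < m" for y using h unfolding bij_betw_def by auto
  have FN: "F ` N y \<subseteq> {1..n}" for y using Fr NC by blast
  have Pge: "z \<in> P y \<Longrightarrow> z > n" for z y unfolding P_def s_def by auto
  have disj: "F ` N y \<inter> P y = {}" for y using FN Pge by fastforce
  have cardG: "card (G y) = n+1" for y
  proof -
    have "card (F ` N y) = card (N y)" using card_image inj_on_subset[OF finj NC] by blast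
    moreover have "card (P y) = n+1 - card (N y)" unfolding P_def by simp
    ultimately show ?thesis unfolding G_def using card_Un_disjoint[OF _ _ disj] cN
      by (metis P_def finite_atLeastLessThan finite_imageI finite_subset NC assms(1) le_add_diff_inverse le_SucI Suc_eq_plus1)
  qed
  have Gsub: "y \<in> D \<Longrightarrow> G y \<subseteq> {1..a}" for y
  proof -
    assume "y \<in> D"
    then have "h y + 2 \<le> m + 1" using hy by (auto simp: Suc_le_eq)
    then have "(h y + 2) * (n+1) \<le> (m+1)*(n+1)" by (rule mult_right_mono) simp
    then have "s y + (n+1) \<le> a" unfolding s_def a_def by (simp add: algebra_simps)
    then have "P y \<subseteq> {1..a}" unfolding P_def s_def by auto
    moreover have "n \<le> a" unfolding a_def by simp
    ultimately show ?thesis unfolding G_def using FN by fastforce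
  qed
  have Gk: "y \<in> D \<Longrightarrow> G y \<in> ksubsets a b" for y
    using Gsub cardG unfolding ksubsets_def b_def by auto
  have ginj: "inj_on G D"
  proof (rule inj_onI)
    fix y y' assume yD: "y \<in> D" and "y' \<in> D" and eq: "G y = G y'"
    define e where "e = s y + n"
    have "e \<in> P y" unfolding e_def P_def using cN[of y] by auto
    then have "e \<in> G y'" using eq unfolding G_def by auto
    moreover have "e \<notin> F ` N y'" using FN[of y'] unfolding e_def s_def by fastforce
    ultimately have "e \<in> P y'" unfolding G_def by auto
    then have "s y' \<le> e \<and> e < s y' + (n+1)" unfolding P_def by auto
    then have "e div (n+1) = h y' + 1" unfolding s_def
      by (intro div_nat_eqI) (auto simp: algebra_simps)
    moreover have "e div (n+1) = h y + 1" unfolding e_def s_def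
      by (intro div_nat_eqI) (auto simp: algebra_simps)
    ultimately have "h y = h y'" by simp
    then show "y = y'" using h yD \<open>y' \<in> D\<close> unfolding bij_betw_def inj_on_def by blast
  qed
  define H where "H = induced_sub (B_graph a b) (F ` C) (G ` D)"
  have "is_induced_sub H (B_graph a b)"
    unfolding is_induced_sub_def B_graph_def H_def using Fr Gk
    by (auto simp: a_def intro!: exI[of _ "F ` C"] exI[of _ "G ` D"]
        simp add: B_graph_def) (fastforce simp: mult.commute)
  moreover have "bigraph_iso (C, D, E) H"
  proof -
    have "\<forall>x\<in>C. \<forall>y\<in>D. (x, y) \<in> E \<longleftrightarrow> (F x, G y) \<in> {(x, X). x \<in> {1..a} \<and> X \<in> ksubsets a b \<and> x \<in> X} \<inter> (F ` C \<times> G ` D)"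
    proof (intro ballI)
      fix x y assume x: "x \<in> C" and y: "y \<in> D"
      have "F x \<in> G y \<longleftrightarrow> F x \<in> F ` N y" unfolding G_def using Pge Fr[OF x] by fastforce
      also have "\<dots> \<longleftrightarrow> x \<in> N y" using inj_on_image_mem_iff[OF finj x NC] .
      finally have "F x \<in> G y \<longleftrightarrow> (x,y) \<in> E" unfolding N_def using x by simp
      moreover have "F x \<in> {1..a}" using Fr[OF x] unfolding a_def by (fastforce simp: mult.commute)
      ultimately show "(x, y) \<in> E \<longleftrightarrow> (F x, G y) \<in> {(x, X). x \<in> {1..a} \<and> X \<in> ksubsets a b \<and> x \<in> X} \<inter> (F ` C \<times> G ` D)"
        using Gk[OF y] x y by auto
    qed
    then show ?thesis unfolding bigraph_iso_def H_def induced_sub_def B_graph_def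
      using finj ginj apply simp apply (rule exI[of _ F], rule conjI, simp add: inj_on_imp_bij_betw finj, rule exI[of _ G]) by (auto simp: inj_on_imp_bij_betw)
  qed
  moreover have "b \<le> a" unfolding a_def b_def by simp
  ultimately show ?thesis by blast
qed

end
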